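(* In the Gaussian observation model described in the context, for every $\varepsilon\in(0,1/2)$ there exists an affine estimate $\hat g_\varepsilon(\omega)=\phi^T\omega+c$ such that $$\mathrm{Risk}(\hat g_\varepsilon;\varepsilon)\le\frac{\mathrm{ErfInv}(\varepsilon/2)}{\mathrm{ErfInv}(\varepsilon)}\,\mathrm{Risk}_*(\varepsilon).$$
   Context: Gaussian model: $X\subset\mathbb R^n$ is a nonempty convex compact set, $A$ is an $L\times n$ real matrix, $g\in\mathbb R^n$, and one observes $\omega=Ax+\xi\in\mathbb R^L$ with $\xi\sim\mathcal N(0,I_L)$ and unknown $x\in X$; the goal is to estimate $g^Tx$. An estimate is a Borel function $\hat g:\mathbb R^L\to\mathbb R$; it is affine if $\hat g(\omega)=\phi^T\omega+c$ for some $\phi\in\mathbb R^L$, $c\in\mathbb R$. For $\varepsilon\in(0,1)$, $\mathrm{Risk}(\hat g;\varepsilon)=\inf\{\delta:\sup_{x\in X}\mathrm{Prob}\{|\hat g(Ax+\xi)-g^Tx|>\delta\}<\varepsilon\}$; $\mathrm{Risk}_*(\varepsilon)$ is its infimum over all Borel estimates. $\mathrm{ErfInv}(y)$ denotes the number $t$ with $y=\frac1{\sqrt{2\pi}}\int_t^\infty e^{-s^2/2}ds$. *)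

theory Defs
  imports "HOL-Analysis.Analysis" "HOL-Probability.Probability"
begin

definition gauss_noise :: "(real ^ 'l) measure" where
  "gauss_noise = distr (PiM UNIV (\<lambda>_::'l. density lborel std_normal_density)) borel
                       (\<lambda>f. \<chi> i. f i)"

definition err_prob :: "real ^ 'n ^ 'l \<Rightarrow> real ^ 'n \<Rightarrow> (real ^ 'l \<Rightarrow> real) \<Rightarrow> real ^ 'n \<Rightarrow> real \<Rightarrow> real" where
  "err_prob A g ghat x \<delta> =
     measure gauss_noise {\<xi>. \<bar>ghat (A *v x + \<xi>) - g \<bullet> x\<bar> > \<delta>}"

text \<open>Risk(ghat; eps) = inf { delta : sup_{x in X} Prob{...} < eps } (valued in ereal,
  so that the infimum of the empty set is +infinity).\<close>
definition Risk :: "(real ^ 'n) set \<Rightarrow> real ^ 'n ^ 'l \<Rightarrow> real ^ 'n \<Rightarrow> (real ^ 'l \<Rightarrow> real) \<Rightarrow> real \<Rightarrow> ereal" where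
  "Risk X A g ghat \<epsilon> =
     Inf (ereal ` {\<delta>. (SUP x\<in>X. ereal (err_prob A g ghat x \<delta>)) < ereal \<epsilon>})"

definition Risk_star :: "(real ^ 'n) set \<Rightarrow> real ^ 'n ^ 'l \<Rightarrow> real ^ 'n \<Rightarrow> real \<Rightarrow> ereal" where
  "Risk_star X A g \<epsilon> =
     (INF ghat\<in>(borel_measurable borel :: (real ^ 'l \<Rightarrow> real) set). Risk X A g ghat \<epsilon>)"

definition ErfInv :: "real \<Rightarrow> real" where
  "ErfInv y = (THE t. y = (LBINT s:{t..}. (1 / sqrt (2 * pi)) * exp (- s\<^sup>2 / 2)))"

end

theory Submission
  imports Defs
begin


definition NN :: "real measure" where "NN = density lborel std_normal_density"
definition Qt :: "real \<Rightarrow> real" where "Qt t = measure NN {t..}"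

lemma prob_space_NN: "prob_space NN"
  unfolding NN_def using prob_space_normal_density by auto

lemma sets_NN[simp, measurable_cong]: "sets NN = sets borel"
  unfolding NN_def by simp

lemma space_NN[simp]: "space NN = UNIV"
  unfolding NN_def by simp

interpretation NN: prob_space NN by (rule prob_space_NN)

lemma real_distribution_NN: "real_distribution NN"
  unfolding real_distribution_def real_distribution_axioms_def
  by (simp add: prob_space_NN)

interpretation NNd: real_distribution NN by (rule real_distribution_NN)

lemma emeasure_NN: "A \<in> sets borel \<Longrightarrow> emeasure NN A = (\<integral>\<^sup>+ x. ennreal (std_normal_density x) * indicator A x \<partial>lborel)"
  unfolding NN_def by (subst emeasure_density) auto

lemma NN_atom: "measure NN {x} = 0"
proof -
  have "emeasure NN {x} = (\<integral>\<^sup>+ y. ennreal (std_normal_density y) * indicator {x} y \<partial>lborel)"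
    by (rule emeasure_NN) simp
  also have "\<dots> = 0" by (rule nn_integral_null_set) auto
  finally show ?thesis by (simp add: measure_def)
qed

lemma Qt_cdf: "Qt t = 1 - cdf NN t"
proof -
  have "measure NN {t..} = 1 - measure NN (UNIV - {t..})"
    using NN.prob_compl[of "{t..}"] by simp
  also have "UNIV - {t..} = {..<t}" by auto
  also have "measure NN {..<t} = measure NN {..t}"
  proof -
    have e: "{..t} = {..<t} \<union> {t}" by auto
    have "measure NN ({..<t} \<union> {t}) = measure NN {..<t} + measure NN {t}"
      by (rule NN.finite_measure_Union) auto
    then have "measure NN {..t} = measure NN {..<t} + measure NN {t}" using e by simp
    then show ?thesis using NN_atom by simp
  qed
  finally show ?thesis by (simp add: Qt_def cdf_def)
qed

lemma Qt_cont: "isCont Qt x"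
proof -
  have "isCont (cdf NN) x" using NNd.isCont_cdf NN_atom by simp
  then show ?thesis unfolding Qt_cdf[abs_def] by (intro continuous_intros)
qed

lemma Qt_at_top: "(Qt \<longlongrightarrow> 0) at_top"
proof -
  have "((\<lambda>t. 1 - cdf NN t) \<longlongrightarrow> 1 - 1) at_top"
    by (intro tendsto_intros NNd.cdf_lim_at_top_prob)
  then show ?thesis unfolding Qt_cdf[abs_def] by simp
qed

lemma Qt_at_bot: "(Qt \<longlongrightarrow> 1) at_bot"
proof -
  have "((\<lambda>t. 1 - cdf NN t) \<longlongrightarrow> 1 - 0) at_bot"
    by (intro tendsto_intros NNd.cdf_lim_at_bot)
  then show ?thesis unfolding Qt_cdf[abs_def] by simp
qed

lemma NN_refl: "measure NN {..-t} = Qt t"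
proof -
  have "emeasure NN {..-t} = (\<integral>\<^sup>+ x. ennreal (std_normal_density x) * indicator {..-t} x \<partial>lborel)"
    by (rule emeasure_NN) simp
  also have "\<dots> = ennreal \<bar>-1\<bar> * (\<integral>\<^sup>+ x. ennreal (std_normal_density (0 + -1 * x)) * indicator {..-t} (0 + -1 * x) \<partial>lborel)"
    by (rule nn_integral_real_affine[where f="\<lambda>x. ennreal (std_normal_density x) * indicator {..-t} x" and c="-1" and t=0]) auto
  also have "\<dots> = (\<integral>\<^sup>+ x. ennreal (std_normal_density x) * indicator {t..} x \<partial>lborel)"
    by (auto intro!: nn_integral_cong simp: std_normal_density_def split: split_indicator)
  also have "\<dots> = emeasure NN {t..}"
    by (rule emeasure_NN[symmetric]) simp
  finally show ?thesis by (simp add: Qt_def measure_def)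
qed

lemma NN_refl': "measure NN {..<-t} = Qt t"
proof -
  have e: "{..-t} = {..<-t} \<union> {-t}" by auto
  have "measure NN ({..<-t} \<union> {-t}) = measure NN {..<-t} + measure NN {-t}"
    by (rule NN.finite_measure_Union) auto
  then have "measure NN {..-t} = measure NN {..<-t} + measure NN {-t}" using e by simp
  then show ?thesis using NN_atom NN_refl by simp
qed

lemma Qt_gt: "measure NN {t<..} = Qt t"
proof -
  have e: "{t..} = {t<..} \<union> {t}" by auto
  have "measure NN ({t<..} \<union> {t}) = measure NN {t<..} + measure NN {t}"
    by (rule NN.finite_measure_Union) auto
  then have "measure NN {t..} = measure NN {t<..} + measure NN {t}" using e by simp
  then show ?thesis using NN_atom by (simp add: Qt_def)
qed

lemma Qt_0: "Qt 0 = 1/2"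
proof -
  have "1 = measure NN ({..<0} \<union> {0..})"
    by (subst NN.prob_space[symmetric]) (auto intro!: arg_cong[where f="measure NN"])
  also have "\<dots> = measure NN {..<0} + measure NN {0..}"
    by (subst NN.finite_measure_Union) auto
  also have "\<dots> = Qt 0 + Qt 0" using NN_refl'[of 0] by (simp add: Qt_def)
  finally show ?thesis by simp
qed

lemma std_normal_density_mono:
  assumes "\<bar>x\<bar> \<le> K" shows "std_normal_density K \<le> std_normal_density x"
proof -
  have K: "K \<ge> 0" using assms by linarith
  have "x\<^sup>2 \<le> K\<^sup>2" using abs_le_square_iff[of x K] assms K by simp
  then show ?thesis unfolding std_normal_density_def
    by (intro mult_left_mono) simp_all
qed

lemma Qt_strict_mono: assumes "s < t" shows "Qt t < Qt s"
proof -
  define K where "K = \<bar>s\<bar> + \<bar>t\<bar>"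
  define c where "c = std_normal_density K"
  have c: "0 < c" unfolding c_def by (simp add: normal_density_pos)
  have "ennreal c * (t - s) = (\<integral>\<^sup>+ x. ennreal c * indicator {s..<t} x \<partial>lborel)"
    using assms by (simp add: nn_integral_cmult_indicator)
  also have "\<dots> \<le> (\<integral>\<^sup>+ x. ennreal (std_normal_density x) * indicator {s..<t} x \<partial>lborel)"
    unfolding c_def K_def
    by (intro nn_integral_mono) (auto simp: indicator_def intro!: std_normal_density_mono)
  also have "\<dots> = emeasure NN {s..<t}" by (rule emeasure_NN[symmetric]) simp
  finally have "ennreal (c * (t - s)) \<le> emeasure NN {s..<t}"
    using c assms by (simp add: ennreal_mult)
  then have pos: "0 < measure NN {s..<t}"
    using c assms by (metis NN.emeasure_eq_measure ennreal_le_iff measure_nonneg mult_pos_pos diff_gt_0_iff_gt order_less_le_trans)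
  have e: "{s..} = {s..<t} \<union> {t..}" using assms by auto
  have "measure NN ({s..<t} \<union> {t..}) = measure NN {s..<t} + measure NN {t..}"
    by (rule NN.finite_measure_Union) auto
  then have "measure NN {s..} = measure NN {s..<t} + measure NN {t..}" using e by simp
  then show ?thesis using pos by (simp add: Qt_def)
qed

lemma Qt_mono: "s \<le> t \<Longrightarrow> Qt t \<le> Qt s"
  using Qt_strict_mono by (cases "s = t") (auto intro: less_imp_le)

lemma Qt_LBINT: "Qt t = (LBINT s:{t..}. (1 / sqrt (2 * pi)) * exp (- s\<^sup>2 / 2))"
proof -
  have int: "integrable lborel (\<lambda>x. indicator {t..} x * std_normal_density x)"
    using integrable_mult_indicator[of "{t..}" lborel std_normal_density] by simp
  have "emeasure NN {t..} = (\<integral>\<^sup>+ x. ennreal (indicator {t..} x * std_normal_density x) \<partial>lborel)"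
    by (subst emeasure_NN) (auto intro!: nn_integral_cong simp: indicator_def)
  also have "\<dots> = ennreal (\<integral> x. indicator {t..} x * std_normal_density x \<partial>lborel)"
    using int by (intro nn_integral_eq_integral) auto
  finally have "Qt t = (\<integral> x. indicator {t..} x * std_normal_density x \<partial>lborel)"
    by (simp add: Qt_def measure_def integral_nonneg_AE)
  then show ?thesis by (simp add: set_lebesgue_integral_def std_normal_density_def)
qed

lemma Qt_exists: assumes "0 < y" "y < 1" shows "\<exists>t. Qt t = y"
proof -
  from order_tendstoD(1)[OF Qt_at_bot assms(2)] obtain a where a: "\<And>x. x \<le> a \<Longrightarrow> y < Qt x"
    by (auto simp: eventually_at_bot_linorder)
  from order_tendstoD(2)[OF Qt_at_top assms(1)] obtain b where b: "\<And>x. x \<ge> b \<Longrightarrow> Qt x < y"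
    by (auto simp: eventually_at_top_linorder)
  define b' where "b' = max a b"
  have "Qt b' \<le> y" "y \<le> Qt a" "a \<le> b'" using a[of a] b[of b'] by (auto simp: b'_def)
  moreover have "continuous_on {a..b'} Qt" using Qt_cont by (simp add: continuous_at_imp_continuous_on)
  ultimately show ?thesis using IVT2'[of Qt b' y a] by auto
qed

lemma Qt_ErfInv: assumes "0 < y" "y < 1" shows "Qt (ErfInv y) = y"
proof -
  obtain t where t: "Qt t = y" using Qt_exists assms by blast
  have "ErfInv y = t" unfolding ErfInv_def
  proof (rule the_equality)
    show "y = (LBINT s:{t..}. 1 / sqrt (2 * pi) * exp (- s\<^sup>2 / 2))" using t Qt_LBINT by simp
    fix t' assume "y = (LBINT s:{t'..}. 1 / sqrt (2 * pi) * exp (- s\<^sup>2 / 2))"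
    then have "Qt t' = Qt t" using t Qt_LBINT by simp
    then show "t' = t" using Qt_strict_mono by (metis linorder_neqE_linordered_idom less_irrefl)
  qed
  then show ?thesis using t by simp
qed



definition Om :: "('l::finite \<Rightarrow> real) measure" where "Om = PiM UNIV (\<lambda>_. NN)"

lemma prob_space_Om: "prob_space (Om :: ('l::finite \<Rightarrow> real) measure)"
  unfolding Om_def by (intro prob_space_PiM prob_space_NN)

lemma sets_Om: "sets (Om :: ('l::finite \<Rightarrow> real) measure) = sets (PiM UNIV (\<lambda>_. borel))"
  unfolding Om_def by (intro sets_PiM_cong) auto

lemma space_Om[simp]: "space (Om :: ('l::finite \<Rightarrow> real) measure) = UNIV"
  unfolding Om_def by (simp add: space_PiM)

lemma measurable_Om_cong[measurable_cong]: "sets (Om :: ('l::finite \<Rightarrow> real) measure) = sets (PiM UNIV (\<lambda>_. borel))"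
  by (rule sets_Om)

lemma vec_measurable[measurable]:
  "(\<lambda>f. \<chi> i. f i) \<in> borel_measurable (PiM (UNIV :: 'l::finite set) (\<lambda>_. borel :: real measure))"
proof -
  have "(\<lambda>f. (\<chi> i. f i) \<bullet> b) \<in> borel_measurable (PiM (UNIV :: 'l set) (\<lambda>_. borel :: real measure))"
    if "b \<in> Basis" for b :: "real ^ 'l"
  proof -
    from that obtain j where b: "b = axis j 1" by (auto simp: Basis_vec_def)
    have "(\<lambda>f. f j) \<in> borel_measurable (PiM (UNIV :: 'l set) (\<lambda>_. borel :: real measure))" by measurable
    then show ?thesis by (simp add: b inner_axis)
  qed
  then show ?thesis using borel_measurable_euclidean_space[of vec_lambda] by auto
qed

lemma gauss_noise_eq: "gauss_noise = distr (Om :: ('l::finite \<Rightarrow> real) measure) borel (\<lambda>f. \<chi> i. f i)"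
  unfolding gauss_noise_def Om_def NN_def ..

lemma prob_space_gauss: "prob_space (gauss_noise :: (real ^ 'l::finite) measure)"
  unfolding gauss_noise_eq
  by (intro prob_space.prob_space_distr prob_space_Om) (simp add: measurable_cong_sets[OF sets_Om refl])

lemma sets_gauss[simp, measurable_cong]: "sets (gauss_noise :: (real ^ 'l::finite) measure) = sets borel"
  unfolding gauss_noise_eq by simp

lemma space_gauss[simp]: "space (gauss_noise :: (real ^ 'l::finite) measure) = UNIV"
  unfolding gauss_noise_eq by simp

lemma indep_coords: "prob_space.indep_vars (Om :: ('l::finite \<Rightarrow> real) measure) (\<lambda>_. borel) (\<lambda>i f. f i) UNIV"
proof -
  interpret prob_space "Om :: ('l \<Rightarrow> real) measure" by (rule prob_space_Om)
  have comp: "distr Om borel (\<lambda>f. f i) = NN" for i :: 'l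
  proof -
    have "distr Om borel (\<lambda>f. f i) = distr Om NN (\<lambda>f. f i)"
      by (rule distr_cong) auto
    also have "\<dots> = NN" unfolding Om_def
      by (rule distr_PiM_component) (auto intro: prob_space_NN)
    finally show ?thesis .
  qed
  show ?thesis
  proof (subst indep_vars_iff_distr_eq_PiM)
    show "random_variable borel (\<lambda>f. f i)" for i :: 'l
      by (simp add: measurable_cong_sets[OF sets_Om refl])
    have "distr (Om :: ('l \<Rightarrow> real) measure) (PiM UNIV (\<lambda>_. borel)) (\<lambda>x. \<lambda>i\<in>UNIV. x i) = distr (Om :: ('l \<Rightarrow> real) measure) (PiM UNIV (\<lambda>_. borel)) (\<lambda>x. x)"
      by (rule distr_cong) auto
    also have "\<dots> = (Om :: ('l \<Rightarrow> real) measure)" by (rule distr_id2) (simp add: sets_Om)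
    also have "\<dots> = (PiM UNIV (\<lambda>i. distr (Om :: ('l \<Rightarrow> real) measure) borel (\<lambda>f. f i)))"
    proof -
      have "PiM UNIV (\<lambda>i. distr (Om :: ('l \<Rightarrow> real) measure) borel (\<lambda>f. f i)) = PiM UNIV (\<lambda>i::'l. NN)"
        by (rule PiM_cong) (simp_all add: comp)
      then show ?thesis unfolding Om_def by (rule sym)
    qed
    finally show "distr (Om :: ('l \<Rightarrow> real) measure) (PiM UNIV (\<lambda>_. borel)) (\<lambda>x. \<lambda>i\<in>UNIV. x i) = (PiM UNIV (\<lambda>i. distr (Om :: ('l \<Rightarrow> real) measure) borel (\<lambda>f. f i)))" .
  qed simp
qed

lemma coord_distributed: "distributed (Om :: ('l::finite \<Rightarrow> real) measure) lborel (\<lambda>f. f i) std_normal_density"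
proof -
  have "distr Om lborel (\<lambda>f. f i) = distr Om NN (\<lambda>f. f i)"
    by (rule distr_cong) auto
  also have "\<dots> = NN" unfolding Om_def
    by (rule distr_PiM_component) (auto intro: prob_space_NN)
  finally show ?thesis unfolding distributed_def NN_def
    by (auto simp: measurable_cong_sets[OF sets_Om refl])
qed

lemma lincomb_distributed:
  fixes u :: "real ^ 'l::finite"
  assumes "u \<noteq> 0"
  shows "distributed (Om :: ('l \<Rightarrow> real) measure) lborel (\<lambda>f. u \<bullet> (\<chi> i. f i)) (normal_density 0 (norm u))"
proof -
  interpret prob_space "Om :: ('l \<Rightarrow> real) measure" by (rule prob_space_Om)
  define I where "I = {i. u $ i \<noteq> 0}"
  have I: "finite I" "I \<noteq> {}" using assms by (auto simp: I_def vec_eq_iff)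
  have ind: "indep_vars (\<lambda>_. borel) (\<lambda>i f. u $ i * f i) I"
    using indep_vars_compose2[OF indep_vars_subset[OF indep_coords, of I], of "\<lambda>i x. u $ i * x" "\<lambda>_. borel"]
    by auto
  have d: "distributed Om lborel (\<lambda>f. u $ i * f i) (normal_density 0 \<bar>u $ i\<bar>)" if "i \<in> I" for i
    using normal_density_affine[OF coord_distributed[of i], of "u $ i" 0] that by (simp add: I_def)
  have "distributed Om lborel (\<lambda>f. \<Sum>i\<in>I. u $ i * f i) (normal_density (\<Sum>i\<in>I. 0) (sqrt (\<Sum>i\<in>I. \<bar>u $ i\<bar>\<^sup>2)))"
    by (rule sum_indep_normal[OF I ind]) (auto simp: I_def d)
  moreover have "(\<lambda>f. \<Sum>i\<in>I. u $ i * f i) = (\<lambda>f. u \<bullet> (\<chi> i. f i))"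
    by (auto simp: inner_vec_def I_def intro!: sum.mono_neutral_left)
  moreover have "sqrt (\<Sum>i\<in>I. \<bar>u $ i\<bar>\<^sup>2) = norm u"
    by (auto simp: norm_vec_def L2_set_def I_def intro!: arg_cong[where f=sqrt] sum.mono_neutral_left)
  ultimately show ?thesis by simp
qed

lemma std_distributed_measure:
  assumes "distributed (Om :: ('l::finite \<Rightarrow> real) measure) lborel Z std_normal_density" "B \<in> sets borel"
  shows "measure Om {f. Z f \<in> B} = measure NN B"
proof -
  have "emeasure Om {f \<in> space Om. Z f \<in> B} = (\<integral>\<^sup>+x. ennreal (std_normal_density x) * indicator B x \<partial>lborel)"
    using distributed_emeasure[OF assms(1), of B] assms(2) by (simp add: vimage_def)
  also have "\<dots> = emeasure NN B" using emeasure_NN assms(2) by simp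
  finally show ?thesis by (simp add: measure_def vimage_def)
qed

lemma gauss_measure: "A \<in> sets borel \<Longrightarrow> measure (gauss_noise :: (real ^ 'l::finite) measure) A = measure (Om :: ('l \<Rightarrow> real) measure) {f. (\<chi> i. f i) \<in> A}"
  unfolding gauss_noise_eq
  by (subst measure_distr) (auto simp: measurable_cong_sets[OF sets_Om refl] vimage_def)

lemma tail_gt:
  fixes u :: "real ^ 'l::finite"
  assumes "u \<noteq> 0"
  shows "measure (gauss_noise :: (real ^ 'l) measure) {\<xi>. u \<bullet> \<xi> > s} = Qt (s / norm u)"
    and "measure (gauss_noise :: (real ^ 'l) measure) {\<xi>. u \<bullet> \<xi> \<ge> s} = Qt (s / norm u)"
    and "measure (gauss_noise :: (real ^ 'l) measure) {\<xi>. u \<bullet> \<xi> < - s} = Qt (s / norm u)"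
proof -
  have nu: "0 < norm u" using assms by simp
  interpret prob_space "Om :: ('l \<Rightarrow> real) measure" by (rule prob_space_Om)
  have Z: "distributed (Om :: ('l \<Rightarrow> real) measure) lborel (\<lambda>f. (u \<bullet> (\<chi> i. f i) - 0) / norm u) std_normal_density"
    using iffD1[OF normal_standard_normal_convert[OF nu, of "\<lambda>f. u \<bullet> (\<chi> i. f i)" 0] lincomb_distributed[OF assms]] by simp
  have "measure (gauss_noise :: (real ^ 'l) measure) {\<xi>. u \<bullet> \<xi> > s} = measure (Om :: ('l \<Rightarrow> real) measure) {f. (u \<bullet> (\<chi> i. f i) - 0) / norm u \<in> {s / norm u <..}}"
    using nu by (subst gauss_measure) (auto simp: divide_less_cancel intro!: arg_cong[where f="measure Om"])
  also have "\<dots> = Qt (s / norm u)" by (subst std_distributed_measure[OF Z]) (auto simp: Qt_gt)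
  finally show "measure (gauss_noise :: (real ^ 'l) measure) {\<xi>. u \<bullet> \<xi> > s} = Qt (s / norm u)" .
  have "measure (gauss_noise :: (real ^ 'l) measure) {\<xi>. u \<bullet> \<xi> \<ge> s} = measure (Om :: ('l \<Rightarrow> real) measure) {f. (u \<bullet> (\<chi> i. f i) - 0) / norm u \<in> {s / norm u ..}}"
    using nu by (subst gauss_measure) (auto simp: divide_le_cancel intro!: arg_cong[where f="measure Om"])
  also have "\<dots> = Qt (s / norm u)" by (subst std_distributed_measure[OF Z]) (auto simp: Qt_def)
  finally show "measure (gauss_noise :: (real ^ 'l) measure) {\<xi>. u \<bullet> \<xi> \<ge> s} = Qt (s / norm u)" .
  have "measure (gauss_noise :: (real ^ 'l) measure) {\<xi>. u \<bullet> \<xi> < - s} = measure (Om :: ('l \<Rightarrow> real) measure) {f. (u \<bullet> (\<chi> i. f i) - 0) / norm u \<in> {..< - (s / norm u)}}"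
    using nu by (subst gauss_measure) (auto simp: field_simps intro!: arg_cong[where f="measure Om"])
  also have "\<dots> = Qt (s / norm u)" by (subst std_distributed_measure[OF Z]) (auto simp: NN_refl')
  finally show "measure (gauss_noise :: (real ^ 'l) measure) {\<xi>. u \<bullet> \<xi> < - s} = Qt (s / norm u)" .
qed



definition rho :: "real \<Rightarrow> real \<Rightarrow> real" where
  "rho c x = exp (c * x - c\<^sup>2 / 2)"

lemma rho_dens: "std_normal_density x * rho c x = normal_density c 1 x"
  unfolding rho_def normal_density_def
  by (simp add: mult_exp_exp power2_diff algebra_simps)

lemma oneD_shift:
  assumes A: "A \<in> sets borel"
  shows "emeasure NN {x. x + c \<in> A} = emeasure (density lborel (normal_density c 1)) A"
proof -
  have "emeasure NN {x. x + c \<in> A} = (\<integral>\<^sup>+ x. ennreal (std_normal_density x) * indicator {x. x + c \<in> A} x \<partial>lborel)"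
  proof (intro emeasure_NN)
    have m: "(\<lambda>x::real. x + c) \<in> borel_measurable borel" by simp
    have "(\<lambda>x. x + c) -` A \<inter> space borel \<in> sets borel" by (rule measurable_sets[OF m A])
    then show "{x. x + c \<in> A} \<in> sets borel" by (simp add: vimage_def)
  qed
  also have "\<dots> = (\<integral>\<^sup>+ x. ennreal (normal_density c 1 (c + 1 * x)) * indicator A (c + 1 * x) \<partial>lborel)"
  proof (intro nn_integral_cong)
    fix x :: real
    have "normal_density c 1 (c + 1 * x) = std_normal_density x" by (simp add: normal_density_def)
    moreover have "indicator {x. x + c \<in> A} x = (indicator A (c + 1 * x) :: ennreal)"
      by (simp add: indicator_def add.commute)
    ultimately show "ennreal (std_normal_density x) * indicator {x. x + c \<in> A} x = ennreal (normal_density c 1 (c + 1 * x)) * indicator A (c + 1 * x)"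
      by simp
  qed
  also have "\<dots> = ennreal \<bar>1\<bar> * (\<integral>\<^sup>+ x. ennreal (normal_density c 1 (c + 1 * x)) * indicator A (c + 1 * x) \<partial>lborel)"
    by simp
  also have "\<dots> = (\<integral>\<^sup>+ x. ennreal (normal_density c 1 x) * indicator A x \<partial>lborel)"
  proof -
    have fm: "(\<lambda>x. ennreal (normal_density c 1 x) * indicator A x) \<in> borel_measurable borel"
      using A by measurable
    show ?thesis using nn_integral_real_affine[OF fm, of 1 c] by simp
  qed
  also have "\<dots> = emeasure (density lborel (normal_density c 1)) A"
    using A by (subst emeasure_density) auto
  finally show ?thesis .
qed

lemma oneD_dens:
  assumes A: "A \<in> sets borel"
  shows "(\<integral>\<^sup>+ x. ennreal (rho c x) * indicator A x \<partial>NN) = emeasure (density lborel (normal_density c 1)) A"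
proof -
  have "(\<integral>\<^sup>+ x. ennreal (rho c x) * indicator A x \<partial>NN) = (\<integral>\<^sup>+ x. ennreal (std_normal_density x) * (ennreal (rho c x) * indicator A x) \<partial>lborel)"
  proof -
    have gm: "(\<lambda>x. ennreal (rho c x) * indicator A x) \<in> borel_measurable lborel"
      using A unfolding rho_def by measurable
    have fm: "(\<lambda>x. ennreal (std_normal_density x)) \<in> borel_measurable lborel" by measurable
    show ?thesis unfolding NN_def using nn_integral_density[OF fm gm] by simp
  qed
  also have "\<dots> = (\<integral>\<^sup>+ x. ennreal (normal_density c 1 x) * indicator A x \<partial>lborel)"
  proof (intro nn_integral_cong)
    fix x :: real
    have "ennreal (std_normal_density x) * ennreal (rho c x) = ennreal (normal_density c 1 x)"
    proof -
      have "0 \<le> std_normal_density x" "0 \<le> rho c x" by (auto simp: rho_def)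
      then have "ennreal (std_normal_density x) * ennreal (rho c x) = ennreal (std_normal_density x * rho c x)"
        by (simp only: ennreal_mult)
      then show ?thesis by (simp only: rho_dens)
    qed
    then show "ennreal (std_normal_density x) * (ennreal (rho c x) * indicator A x) = ennreal (normal_density c 1 x) * indicator A x"
      by (simp add: mult.assoc[symmetric])
  qed
  also have "\<dots> = emeasure (density lborel (normal_density c 1)) A"
    using A by (subst emeasure_density) auto
  finally show ?thesis .
qed

lemma rho_measurable[measurable]: "rho c \<in> borel_measurable borel"
  unfolding rho_def by measurable

lemma shift_distr:
  fixes c :: "'l::finite \<Rightarrow> real"
  shows "distr (Om :: ('l \<Rightarrow> real) measure) (PiM UNIV (\<lambda>_. borel)) (\<lambda>f i. f i + c i)
       = density (Om :: ('l \<Rightarrow> real) measure) (\<lambda>f. \<Prod>i\<in>UNIV. ennreal (rho (c i) (f i)))"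
proof -
  define Mi where "Mi = (\<lambda>i. density lborel (normal_density (c i) 1))"
  interpret Pr: product_sigma_finite Mi
    unfolding product_sigma_finite_def Mi_def
    by (auto intro!: prob_space_imp_sigma_finite prob_space_normal_density)
  interpret PN: product_sigma_finite "\<lambda>_::'l. NN"
    unfolding product_sigma_finite_def
    by (auto intro!: prob_space_imp_sigma_finite prob_space_NN)
  have setsMi: "sets (Mi i) = sets borel" for i unfolding Mi_def by simp
  have sPB: "sets (PiM (UNIV :: 'l set) Mi) = sets (PiM UNIV (\<lambda>_. borel :: real measure))"
    by (intro sets_PiM_cong) (auto simp: setsMi)
  have meas_shift: "(\<lambda>f i. f i + c i) \<in> measurable (Om :: ('l \<Rightarrow> real) measure) (PiM UNIV (\<lambda>_. borel :: real measure))"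
  proof -
    have "(\<lambda>f. \<lambda>i\<in>UNIV. f i + c i) \<in> measurable (PiM UNIV (\<lambda>_. borel :: real measure)) (PiM UNIV (\<lambda>_. borel :: real measure))"
      by (rule measurable_restrict) measurable
    moreover have "(\<lambda>f. \<lambda>i\<in>UNIV. f i + c i) = (\<lambda>f i. f i + c i)" by (auto simp: restrict_def)
    ultimately show ?thesis unfolding measurable_cong_sets[OF sets_Om refl] by simp
  qed
  have 1: "distr (Om :: ('l \<Rightarrow> real) measure) (PiM UNIV (\<lambda>_. borel)) (\<lambda>f i. f i + c i) = PiM UNIV Mi"
  proof (rule Pr.PiM_eqI)
    show "sets (distr Om (PiM UNIV (\<lambda>_. borel)) (\<lambda>f i. f i + c i)) = sets (PiM UNIV Mi)"
      using sPB by simp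
    fix A assume A: "\<And>i. i \<in> (UNIV :: 'l set) \<Longrightarrow> A i \<in> sets (Mi i)"
    then have A': "A i \<in> sets borel" for i using setsMi by auto
    have "(\<lambda>f i. f i + c i) -` Pi\<^sub>E UNIV A \<inter> space Om = Pi\<^sub>E UNIV (\<lambda>i. {x. x + c i \<in> A i})"
      by (auto simp: PiE_iff)
    moreover have "emeasure (Om :: ('l \<Rightarrow> real) measure) (Pi\<^sub>E UNIV (\<lambda>i. {x. x + c i \<in> A i})) = (\<Prod>i\<in>UNIV. emeasure NN {x. x + c i \<in> A i})"
      unfolding Om_def using A' by (intro PN.emeasure_PiM) auto
    moreover have "Pi\<^sub>E UNIV A \<in> sets (PiM UNIV (\<lambda>_. borel :: real measure))"
      using A' by (intro sets_PiM_I_finite) auto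
    ultimately show "emeasure (distr Om (PiM UNIV (\<lambda>_. borel)) (\<lambda>f i. f i + c i)) (Pi\<^sub>E UNIV A) = (\<Prod>i\<in>UNIV. emeasure (Mi i) (A i))"
      using meas_shift A' by (simp add: emeasure_distr oneD_shift Mi_def)
  qed simp
  have 2: "density (Om :: ('l \<Rightarrow> real) measure) (\<lambda>f. \<Prod>i\<in>UNIV. ennreal (rho (c i) (f i))) = PiM UNIV Mi"
  proof (rule Pr.PiM_eqI)
    show "sets (density (Om :: ('l \<Rightarrow> real) measure) (\<lambda>f. \<Prod>i\<in>UNIV. ennreal (rho (c i) (f i)))) = sets (PiM UNIV Mi)"
      using sPB sets_Om by simp
    fix A assume A: "\<And>i. i \<in> (UNIV :: 'l set) \<Longrightarrow> A i \<in> sets (Mi i)"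
    then have A': "A i \<in> sets borel" for i using setsMi by auto
    have PA: "Pi\<^sub>E UNIV A \<in> sets (Om :: ('l \<Rightarrow> real) measure)"
      using A' unfolding sets_Om by (intro sets_PiM_I_finite) auto
    have "emeasure (density (Om :: ('l \<Rightarrow> real) measure) (\<lambda>f. \<Prod>i\<in>UNIV. ennreal (rho (c i) (f i)))) (Pi\<^sub>E UNIV A)
        = (\<integral>\<^sup>+ f. (\<Prod>i\<in>UNIV. ennreal (rho (c i) (f i))) * indicator (Pi\<^sub>E UNIV A) f \<partial>Om)"
      using PA by (subst emeasure_density) (auto simp: measurable_cong_sets[OF sets_Om refl])
    also have "\<dots> = (\<integral>\<^sup>+ f. (\<Prod>i\<in>UNIV. ennreal (rho (c i) (f i)) * indicator (A i) (f i)) \<partial>Om)"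
      by (intro nn_integral_cong) (auto simp: prod.distrib indicator_def PiE_iff)
    also have "\<dots> = (\<Prod>i\<in>UNIV. (\<integral>\<^sup>+ x. ennreal (rho (c i) x) * indicator (A i) x \<partial>NN))"
      unfolding Om_def using A' by (intro PN.product_nn_integral_prod) auto
    also have "\<dots> = (\<Prod>i\<in>UNIV. emeasure (Mi i) (A i))"
      using A' by (simp add: oneD_dens Mi_def)
    finally show "emeasure (density (Om :: ('l \<Rightarrow> real) measure) (\<lambda>f. \<Prod>i\<in>UNIV. ennreal (rho (c i) (f i)))) (Pi\<^sub>E UNIV A) = (\<Prod>i\<in>UNIV. emeasure (Mi i) (A i))" .
  qed simp
  show ?thesis using 1 2 by simp
qed

lemma prod_rho:
  fixes a :: "real ^ 'l::finite"
  shows "(\<Prod>i\<in>UNIV. ennreal (rho (a $ i) (f i))) = ennreal (exp (a \<bullet> (\<chi> i. f i) - (norm a)\<^sup>2 / 2))"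
proof -
  have "(\<Prod>i\<in>UNIV. ennreal (rho (a $ i) (f i))) = ennreal (\<Prod>i\<in>UNIV. rho (a $ i) (f i))"
    by (rule prod_ennreal) (simp add: rho_def)
  also have "(\<Prod>i\<in>UNIV. rho (a $ i) (f i)) = exp (\<Sum>i\<in>UNIV. a $ i * f i - (a $ i)\<^sup>2 / 2)"
    unfolding rho_def by (simp add: exp_sum)
  also have "(\<Sum>i\<in>UNIV. a $ i * f i - (a $ i)\<^sup>2 / 2) = a \<bullet> (\<chi> i. f i) - (norm a)\<^sup>2 / 2"
  proof -
    have n1: "(norm a)\<^sup>2 = a \<bullet> a" by (rule power2_norm_eq_inner)
    have n: "(norm a)\<^sup>2 = (\<Sum>i\<in>UNIV. (a $ i)\<^sup>2)"
      unfolding n1 by (simp add: inner_vec_def power2_eq_square)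
    have "(\<Sum>i\<in>UNIV. a $ i * f i - (a $ i)\<^sup>2 / 2) = (\<Sum>i\<in>UNIV. a $ i * f i) - (\<Sum>i\<in>UNIV. (a $ i)\<^sup>2) / 2"
      by (simp add: sum_subtractf sum_divide_distrib)
    also have "\<dots> = a \<bullet> (\<chi> i. f i) - (norm a)\<^sup>2 / 2"
      by (simp add: n inner_vec_def)
    finally show ?thesis .
  qed
  finally show ?thesis .
qed

lemma change_measure:
  fixes a :: "real ^ 'l::finite"
  assumes S: "S \<in> sets borel"
  shows "emeasure (gauss_noise :: (real ^ 'l) measure) {\<xi>. a + \<xi> \<in> S}
       = (\<integral>\<^sup>+ f. indicator S (\<chi> i. f i) * ennreal (exp (a \<bullet> (\<chi> i. f i) - (norm a)\<^sup>2 / 2)) \<partial>(Om :: ('l \<Rightarrow> real) measure))"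
proof -
  have meas_shift: "(\<lambda>f i. f i + a $ i) \<in> measurable (Om :: ('l \<Rightarrow> real) measure) (PiM UNIV (\<lambda>_. borel :: real measure))"
  proof -
    have "(\<lambda>f. \<lambda>i\<in>UNIV. f i + a $ i) \<in> measurable (PiM UNIV (\<lambda>_. borel :: real measure)) (PiM UNIV (\<lambda>_. borel :: real measure))"
      by (rule measurable_restrict) measurable
    moreover have "(\<lambda>f. \<lambda>i\<in>UNIV. f i + a $ i) = (\<lambda>f i. f i + a $ i)" by (auto simp: restrict_def)
    ultimately show ?thesis unfolding measurable_cong_sets[OF sets_Om refl] by simp
  qed
  have Sm: "{g. (\<chi> i. g i) \<in> S} \<in> sets (PiM UNIV (\<lambda>_. borel :: real measure))"
  proof -
    have "vec_lambda -` S \<inter> space (PiM UNIV (\<lambda>_. borel :: real measure)) \<in> sets (PiM UNIV (\<lambda>_. borel :: real measure))"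
      by (rule measurable_sets[OF vec_measurable S])
    then show ?thesis by (simp add: vimage_def space_PiM)
  qed
  have "emeasure (gauss_noise :: (real ^ 'l) measure) {\<xi>. a + \<xi> \<in> S}
      = emeasure (Om :: ('l \<Rightarrow> real) measure) {f. a + (\<chi> i. f i) \<in> S}"
    unfolding gauss_noise_eq using S
    by (subst emeasure_distr) (auto simp: measurable_cong_sets[OF sets_Om refl] vimage_def)
  also have "{f. a + (\<chi> i. f i) \<in> S} = (\<lambda>f i. f i + a $ i) -` {g. (\<chi> i. g i) \<in> S} \<inter> space Om"
  proof -
    have eq: "(\<chi> i. f i + a $ i) = a + (\<chi> i. f i)" for f :: "'l \<Rightarrow> real" by (simp add: vec_eq_iff)
    show ?thesis by (auto simp: vimage_def eq)
  qed
  also have "emeasure (Om :: ('l \<Rightarrow> real) measure) \<dots> = emeasure (distr (Om :: ('l \<Rightarrow> real) measure) (PiM UNIV (\<lambda>_. borel)) (\<lambda>f i. f i + a $ i)) {g. (\<chi> i. g i) \<in> S}"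
    using meas_shift Sm by (subst emeasure_distr) auto
  also have "\<dots> = emeasure (density (Om :: ('l \<Rightarrow> real) measure) (\<lambda>f. \<Prod>i\<in>UNIV. ennreal (rho (a $ i) (f i)))) {g. (\<chi> i. g i) \<in> S}"
    by (simp add: shift_distr)
  also have "\<dots> = (\<integral>\<^sup>+ f. (\<Prod>i\<in>UNIV. ennreal (rho (a $ i) (f i))) * indicator {g. (\<chi> i. g i) \<in> S} f \<partial>Om)"
    using Sm by (subst emeasure_density) (auto simp: measurable_cong_sets[OF sets_Om refl])
  also have "\<dots> = (\<integral>\<^sup>+ f. indicator S (\<chi> i. f i) * ennreal (exp (a \<bullet> (\<chi> i. f i) - (norm a)\<^sup>2 / 2)) \<partial>(Om :: ('l \<Rightarrow> real) measure))"
    by (intro nn_integral_cong) (simp add: prod_rho indicator_def mult.commute)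
  finally show ?thesis .
qed



definition Rr :: "real ^ 'l::finite \<Rightarrow> real ^ 'l \<Rightarrow> real" where
  "Rr a w = exp (a \<bullet> w - (norm a)\<^sup>2 / 2)"

lemma Rr_cont: "continuous_on UNIV (Rr a)"
  unfolding Rr_def[abs_def] by (intro continuous_intros)

lemma Rr_meas[measurable]: "Rr a \<in> borel_measurable borel"
  using Rr_cont by (rule borel_measurable_continuous_onI)

lemma two_point_raw:
  fixes a b :: "real ^ 'l::finite"
  assumes S: "S \<in> sets borel"
  defines "H \<equiv> {w. Rr a w \<le> Rr b w}"
  shows "measure (gauss_noise :: (real ^ 'l) measure) {\<xi>. a + \<xi> \<in> H} + measure (gauss_noise :: (real ^ 'l) measure) {\<xi>. b + \<xi> \<in> - H}
      \<le> measure (gauss_noise :: (real ^ 'l) measure) {\<xi>. a + \<xi> \<in> S} + measure (gauss_noise :: (real ^ 'l) measure) {\<xi>. b + \<xi> \<in> - S}"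
proof -
  interpret G: prob_space "gauss_noise :: (real ^ 'l) measure" by (rule prob_space_gauss)
  have H: "H \<in> sets borel"
    unfolding H_def by (intro borel_closed closed_Collect_le Rr_cont)
  have vm: "vec_lambda \<in> borel_measurable (Om :: ('l \<Rightarrow> real) measure)"
    unfolding measurable_cong_sets[OF sets_Om refl] by (rule vec_measurable)
  have imeas: "(\<lambda>f. indicator T (vec_lambda f) * ennreal (Rr c (vec_lambda f))) \<in> borel_measurable (Om :: ('l \<Rightarrow> real) measure)"
    if T: "T \<in> sets borel" for c T
  proof -
    have gm: "(\<lambda>w. indicator T w * ennreal (Rr c w)) \<in> borel_measurable borel" using T by measurable
    show ?thesis using measurable_compose[OF vm gm] by simp
  qed
  have cm: "emeasure (gauss_noise :: (real ^ 'l) measure) {\<xi>. c + \<xi> \<in> T}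
       = (\<integral>\<^sup>+ f. indicator T (vec_lambda f) * ennreal (Rr c (vec_lambda f)) \<partial>(Om :: ('l \<Rightarrow> real) measure))"
    if "T \<in> sets borel" for c T
    using change_measure[OF that, of c] by (simp add: Rr_def)
  have "ennreal (measure (gauss_noise :: (real ^ 'l) measure) {\<xi>. a + \<xi> \<in> H} + measure (gauss_noise :: (real ^ 'l) measure) {\<xi>. b + \<xi> \<in> - H})
     = emeasure (gauss_noise :: (real ^ 'l) measure) {\<xi>. a + \<xi> \<in> H} + emeasure (gauss_noise :: (real ^ 'l) measure) {\<xi>. b + \<xi> \<in> - H}"
    by (simp add: G.emeasure_eq_measure)
  also have "\<dots> = (\<integral>\<^sup>+ f. indicator H (vec_lambda f) * ennreal (Rr a (vec_lambda f)) \<partial>(Om :: ('l \<Rightarrow> real) measure))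
       + (\<integral>\<^sup>+ f. indicator (- H) (vec_lambda f) * ennreal (Rr b (vec_lambda f)) \<partial>(Om :: ('l \<Rightarrow> real) measure))"
    using cm[OF H, of a] cm[OF borel_comp[OF H], of b] by simp
  also have "\<dots> = (\<integral>\<^sup>+ f. indicator H (vec_lambda f) * ennreal (Rr a (vec_lambda f)) + indicator (- H) (vec_lambda f) * ennreal (Rr b (vec_lambda f)) \<partial>(Om :: ('l \<Rightarrow> real) measure))"
    using H by (intro nn_integral_add[symmetric] imeas borel_comp)
  also have "\<dots> \<le> (\<integral>\<^sup>+ f. indicator S (vec_lambda f) * ennreal (Rr a (vec_lambda f)) + indicator (- S) (vec_lambda f) * ennreal (Rr b (vec_lambda f)) \<partial>(Om :: ('l \<Rightarrow> real) measure))"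
  proof (intro nn_integral_mono)
    fix f :: "'l \<Rightarrow> real"
    define w where "w = vec_lambda f"
    show "indicator H (vec_lambda f) * ennreal (Rr a (vec_lambda f)) + indicator (- H) (vec_lambda f) * ennreal (Rr b (vec_lambda f))
        \<le> indicator S (vec_lambda f) * ennreal (Rr a (vec_lambda f)) + indicator (- S) (vec_lambda f) * ennreal (Rr b (vec_lambda f))"
      unfolding w_def[symmetric] H_def
      by (cases "w \<in> S"; cases "Rr a w \<le> Rr b w") (auto simp: indicator_def intro: ennreal_leI)
  qed
  also have "\<dots> = (\<integral>\<^sup>+ f. indicator S (vec_lambda f) * ennreal (Rr a (vec_lambda f)) \<partial>(Om :: ('l \<Rightarrow> real) measure))
       + (\<integral>\<^sup>+ f. indicator (- S) (vec_lambda f) * ennreal (Rr b (vec_lambda f)) \<partial>(Om :: ('l \<Rightarrow> real) measure))"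
    using S by (intro nn_integral_add imeas borel_comp)
  also have "\<dots> = emeasure (gauss_noise :: (real ^ 'l) measure) {\<xi>. a + \<xi> \<in> S} + emeasure (gauss_noise :: (real ^ 'l) measure) {\<xi>. b + \<xi> \<in> - S}"
    using cm[OF S, of a] cm[OF borel_comp[OF S], of b] by simp
  also have "\<dots> = ennreal (measure (gauss_noise :: (real ^ 'l) measure) {\<xi>. a + \<xi> \<in> S} + measure (gauss_noise :: (real ^ 'l) measure) {\<xi>. b + \<xi> \<in> - S})"
    by (simp add: G.emeasure_eq_measure)
  finally show ?thesis
    by (simp add: ennreal_plus[symmetric] del: ennreal_plus)
qed

lemma lin1: "((x::real) + (y + z / 2) \<le> w + (v + y / 2)) = (x + (y + z - v * 2) / 2 \<le> w)"
  by argo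

lemma lin2: "(\<not> (x::real) + (v + z / 2) \<le> w + (z + y / 2)) = (w + (y + z - v * 2) / 2 < x)"
  by argo

lemma two_point:
  fixes a b :: "real ^ 'l::finite"
  assumes S: "S \<in> sets borel"
  shows "2 * Qt (norm (a - b) / 2) \<le> measure (gauss_noise :: (real ^ 'l) measure) {\<xi>. a + \<xi> \<in> S} + measure (gauss_noise :: (real ^ 'l) measure) {\<xi>. b + \<xi> \<notin> S}"
proof (cases "a = b")
  case True
  interpret G: prob_space "gauss_noise :: (real ^ 'l) measure" by (rule prob_space_gauss)
  have m: "{\<xi>. b + \<xi> \<in> S} \<in> sets (gauss_noise :: (real ^ 'l) measure)"
    using S by measurable
  have "measure (gauss_noise :: (real ^ 'l) measure) {\<xi>. b + \<xi> \<notin> S} = 1 - measure (gauss_noise :: (real ^ 'l) measure) {\<xi>. b + \<xi> \<in> S}"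
    using G.prob_compl[OF m] by (simp add: set_diff_eq)
  then show ?thesis using True Qt_0 by simp
next
  case False
  define u where "u = b - a"
  have u: "u \<noteq> 0" using False by (simp add: u_def)
  have nu: "norm u = norm (a - b)" by (simp add: u_def norm_minus_commute)
  define H where "H = {w. Rr a w \<le> Rr b w}"
  have key: "a + \<xi> \<in> H \<longleftrightarrow> u \<bullet> \<xi> \<ge> (norm u)\<^sup>2 / 2" "b + \<xi> \<in> - H \<longleftrightarrow> u \<bullet> \<xi> < - ((norm u)\<^sup>2 / 2)" for \<xi>
    unfolding H_def Rr_def u_def
    apply (simp_all add: power2_norm_eq_inner inner_add_right inner_diff_left inner_diff_right inner_commute algebra_simps)
    apply (rule lin1)
    apply (rule lin2)
    done
  have "2 * Qt (norm (a - b) / 2) = measure (gauss_noise :: (real ^ 'l) measure) {\<xi>. a + \<xi> \<in> H} + measure (gauss_noise :: (real ^ 'l) measure) {\<xi>. b + \<xi> \<in> - H}"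
  proof -
    have q: "(norm u)\<^sup>2 / 2 / norm u = norm (a - b) / 2" using u nu by (simp add: power2_eq_square)
    show ?thesis unfolding key tail_gt(2)[OF u] tail_gt(3)[OF u] q by simp
  qed
  also have "\<dots> \<le> measure (gauss_noise :: (real ^ 'l) measure) {\<xi>. a + \<xi> \<in> S} + measure (gauss_noise :: (real ^ 'l) measure) {\<xi>. b + \<xi> \<in> - S}"
    unfolding H_def by (rule two_point_raw[OF S])
  finally show ?thesis by simp
qed



lemma duality:
  fixes A :: "real ^ 'n::finite ^ 'l::finite" and g :: "real ^ 'n" and D :: "(real ^ 'n) set"
  assumes D: "convex D" "0 \<in> D" and r: "r > 0"
    and bound: "\<And>d. d \<in> D \<Longrightarrow> norm (A *v d) \<le> 2 * r \<Longrightarrow> g \<bullet> d / 2 \<le> M"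
  shows "\<exists>\<phi>. \<forall>d\<in>D. (g \<bullet> d - \<phi> \<bullet> (A *v d)) / 2 + r * norm \<phi> \<le> M"
proof -
  define S :: "((real ^ 'l) \<times> real) set" where "S = {(A *v d, t) | d t. d \<in> D \<and> t \<le> g \<bullet> d / 2}"
  define T :: "((real ^ 'l) \<times> real) set" where "T = {(v, t). norm v \<le> 2 * r \<and> t > M}"
  have cS: "convex S"
    unfolding convex_def
  proof (intro ballI allI impI)
    fix x y :: "(real ^ 'l) \<times> real" and u v :: real
    assume x: "x \<in> S" and y: "y \<in> S" and uv: "0 \<le> u" "0 \<le> v" "u + v = 1"
    from x obtain d1 t1 where 1: "x = (A *v d1, t1)" "d1 \<in> D" "t1 \<le> g \<bullet> d1 / 2" by (auto simp: S_def)
    from y obtain d2 t2 where 2: "y = (A *v d2, t2)" "d2 \<in> D" "t2 \<le> g \<bullet> d2 / 2" by (auto simp: S_def)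
    have dD: "u *\<^sub>R d1 + v *\<^sub>R d2 \<in> D" using D(1) 1(2) 2(2) uv by (simp add: convex_def)
    have "u * t1 + v * t2 \<le> u * (g \<bullet> d1 / 2) + v * (g \<bullet> d2 / 2)"
      using uv 1(3) 2(3) by (intro add_mono mult_left_mono) auto
    also have "\<dots> = g \<bullet> (u *\<^sub>R d1 + v *\<^sub>R d2) / 2" by (simp add: inner_add_right algebra_simps)
    finally have t: "u * t1 + v * t2 \<le> g \<bullet> (u *\<^sub>R d1 + v *\<^sub>R d2) / 2" .
    have "u *\<^sub>R x + v *\<^sub>R y = (A *v (u *\<^sub>R d1 + v *\<^sub>R d2), u * t1 + v * t2)"
      using 1 2 by (simp add: matrix_vector_right_distrib matrix_vector_mult_scaleR)
    then show "u *\<^sub>R x + v *\<^sub>R y \<in> S" unfolding S_def using dD t by blast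
  qed
  have cT: "convex T"
    unfolding convex_def
  proof (intro ballI allI impI)
    fix x y :: "(real ^ 'l) \<times> real" and u v :: real
    assume x: "x \<in> T" and y: "y \<in> T" and uv: "0 \<le> u" "0 \<le> v" "u + v = 1"
    obtain v1 t1 where 1: "x = (v1, t1)" "norm v1 \<le> 2 * r" "t1 > M" using x by (auto simp: T_def)
    obtain v2 t2 where 2: "y = (v2, t2)" "norm v2 \<le> 2 * r" "t2 > M" using y by (auto simp: T_def)
    have "norm (u *\<^sub>R v1 + v *\<^sub>R v2) \<le> u * norm v1 + v * norm v2"
      using uv by (metis abs_of_nonneg norm_scaleR norm_triangle_ineq)
    also have "\<dots> \<le> u * (2 * r) + v * (2 * r)"
      using uv 1 2 by (intro add_mono mult_left_mono) auto
    also have "\<dots> = (u + v) * (2 * r)" by (simp only: distrib_right)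
    also have "\<dots> = 2 * r" using uv by simp
    finally have n: "norm (u *\<^sub>R v1 + v *\<^sub>R v2) \<le> 2 * r" .
    have "u * t1 + v * t2 > M"
    proof (cases "u = 0")
      case True then show ?thesis using uv 2 by simp
    next
      case False
      then have "u * t1 > u * M" using uv 1 by simp
      moreover have "v * t2 \<ge> v * M" using uv 2 by (intro mult_left_mono) auto
      ultimately have "u * t1 + v * t2 > u * M + v * M" by linarith
      moreover have "u * M + v * M = M" using uv by (metis distrib_right mult_1)
      ultimately show ?thesis by linarith
    qed
    then show "u *\<^sub>R x + v *\<^sub>R y \<in> T" using n 1 2 by (simp add: T_def)
  qed
  have S0: "(0, 0) \<in> S" unfolding S_def using D(2) by force
  have TM: "(v, M + k) \<in> T" if "norm v \<le> 2 * r" "k > 0" for v k using that by (simp add: T_def)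
  have disj: "S \<inter> T = {}"
  proof (rule ccontr)
    assume "S \<inter> T \<noteq> {}"
    then obtain d t where "d \<in> D" "t \<le> g \<bullet> d / 2" "norm (A *v d) \<le> 2 * r" "t > M"
      by (auto simp: S_def T_def)
    then show False using bound by fastforce
  qed
  have Tne: "T \<noteq> {}" using TM[of 0 1] r by auto
  obtain a b0 where a: "a \<noteq> 0" and aS: "\<forall>x\<in>S. inner a x \<le> b0" and aT: "\<forall>x\<in>T. inner a x \<ge> b0"
    using separating_hyperplane_sets[OF cS cT _ Tne disj] S0 by blast
  define \<psi> where "\<psi> = fst a"
  define \<beta> where "\<beta> = snd a"
  have inn: "inner a (v, t) = \<psi> \<bullet> v + \<beta> * t" for v t by (simp add: \<psi>_def \<beta>_def inner_prod_def)
  have b0: "0 \<le> b0" using aS S0 by (auto simp: inn)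
  define v0 where "v0 = (if \<psi> = 0 then 0 else - (2 * r / norm \<psi>) *\<^sub>R \<psi>)"
  have v0: "norm v0 \<le> 2 * r" "\<psi> \<bullet> v0 = - 2 * r * norm \<psi>"
    using r by (auto simp: v0_def power2_norm_eq_inner[symmetric] power2_eq_square)
  have Tk: "b0 \<le> - 2 * r * norm \<psi> + \<beta> * (M + k)" if "k > 0" for k
    using aT TM[OF v0(1) that] v0(2) by (auto simp: inn)
  have \<beta>pos: "\<beta> > 0"
  proof (rule ccontr)
    assume "\<not> \<beta> > 0"
    then consider "\<beta> < 0" | "\<beta> = 0" by linarith
    then show False
    proof cases
      case 1
      have "b0 \<le> - 2 * r * norm \<psi> + \<beta> * (M + (\<bar>M\<bar> + 1))" using Tk[of "\<bar>M\<bar> + 1"] by simp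
      moreover have "\<beta> * (M + (\<bar>M\<bar> + 1)) < 0" using 1 by (intro mult_neg_pos) auto
      moreover have "- 2 * r * norm \<psi> \<le> 0" using r by simp
      ultimately show False using b0 by linarith
    next
      case 2
      then have "\<psi> \<noteq> 0" using a by (auto simp: \<psi>_def \<beta>_def prod_eq_iff)
      then have "2 * r * norm \<psi> > 0" using r by simp
      then show False using Tk[of 1] 2 b0 by simp
    qed
  qed
  have key: "b0 \<le> - 2 * r * norm \<psi> + \<beta> * M"
  proof (rule ccontr)
    assume neg: "\<not> ?thesis"
    define k where "k = (b0 - (- 2 * r * norm \<psi> + \<beta> * M)) / (2 * \<beta>)"
    have k: "k > 0" using neg \<beta>pos by (simp add: k_def)
    have "\<beta> * k = (b0 - (- 2 * r * norm \<psi> + \<beta> * M)) / 2" using \<beta>pos by (simp add: k_def)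
    then show False using Tk[OF k] neg by (simp add: algebra_simps)
  qed
  define \<phi> where "\<phi> = - (2 / \<beta>) *\<^sub>R \<psi>"
  show ?thesis
  proof (intro exI ballI)
    fix d assume d: "d \<in> D"
    then have "(A *v d, g \<bullet> d / 2) \<in> S" unfolding S_def by blast
    then have "\<psi> \<bullet> (A *v d) + \<beta> * (g \<bullet> d / 2) \<le> - 2 * r * norm \<psi> + \<beta> * M"
      using aS key by (auto simp: inn)
    then have "(\<psi> \<bullet> (A *v d) + \<beta> * (g \<bullet> d / 2)) / \<beta> \<le> (- 2 * r * norm \<psi> + \<beta> * M) / \<beta>"
      using \<beta>pos by (intro divide_right_mono) auto
    moreover have "(g \<bullet> d - \<phi> \<bullet> (A *v d)) / 2 + r * norm \<phi> = (\<psi> \<bullet> (A *v d) + \<beta> * (g \<bullet> d / 2)) / \<beta> + 2 * r * norm \<psi> / \<beta>"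
      using \<beta>pos by (simp add: \<phi>_def field_simps)
    moreover have "(- 2 * r * norm \<psi> + \<beta> * M) / \<beta> = M - 2 * r * norm \<psi> / \<beta>"
      using \<beta>pos by (simp add: field_simps)
    ultimately show "(g \<bullet> d - \<phi> \<bullet> (A *v d)) / 2 + r * norm \<phi> \<le> M" by linarith
  qed
qed



lemma err_set_meas:
  fixes A :: "real ^ 'n::finite ^ 'l::finite" and ghat :: "real ^ 'l \<Rightarrow> real"
  assumes gh: "ghat \<in> borel_measurable borel"
  shows "{\<xi>. \<bar>ghat (A *v x + \<xi>) - g \<bullet> x\<bar> > \<delta>} \<in> sets (gauss_noise :: (real ^ 'l) measure)"
proof -
  have c: "(\<lambda>\<xi>::real^'l. A *v x + \<xi>) \<in> borel_measurable borel"
    by (intro borel_measurable_continuous_onI continuous_intros)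
  have "(\<lambda>\<xi>. ghat (A *v x + \<xi>)) \<in> borel_measurable borel"
    using measurable_compose[OF c gh] by simp
  then have "(\<lambda>\<xi>. \<bar>ghat (A *v x + \<xi>) - g \<bullet> x\<bar>) \<in> borel_measurable borel" by measurable
  then have "{\<xi>. \<bar>ghat (A *v x + \<xi>) - g \<bullet> x\<bar> > \<delta>} \<in> sets borel" by measurable
  then show ?thesis by simp
qed

lemma LB0:
  fixes X :: "(real ^ 'n::finite) set" and A :: "real ^ 'n ^ 'l::finite" and g :: "real ^ 'n"
    and ghat :: "real ^ 'l \<Rightarrow> real"
  assumes gh: "ghat \<in> borel_measurable borel"
    and ex: "err_prob A g ghat x \<delta> < \<epsilon>" and ey: "err_prob A g ghat y \<delta> < \<epsilon>"
    and nA: "norm (A *v (x - y)) \<le> 2 * q" and Qq: "Qt q = \<epsilon>"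
    and ge: "g \<bullet> y \<le> g \<bullet> x"
  shows "g \<bullet> (x - y) / 2 \<le> \<delta>"
proof (rule ccontr)
  assume neg: "\<not> ?thesis"
  interpret G: prob_space "gauss_noise :: (real ^ 'l) measure" by (rule prob_space_gauss)
  define m where "m = (g \<bullet> x + g \<bullet> y) / 2"
  define S where "S = {\<omega>. ghat \<omega> < m}"
  have S: "S \<in> sets borel" unfolding S_def using gh by measurable
  have "2 * Qt (norm (A *v x - A *v y) / 2) \<le> measure (gauss_noise :: (real ^ 'l) measure) {\<xi>. A *v x + \<xi> \<in> S} + measure (gauss_noise :: (real ^ 'l) measure) {\<xi>. A *v y + \<xi> \<notin> S}"
    by (rule two_point[OF S])
  moreover have "Qt q \<le> Qt (norm (A *v x - A *v y) / 2)"
    using nA by (intro Qt_mono) (simp add: matrix_vector_mult_diff_distrib)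
  moreover have "measure (gauss_noise :: (real ^ 'l) measure) {\<xi>. A *v x + \<xi> \<in> S} \<le> err_prob A g ghat x \<delta>"
    unfolding err_prob_def
  proof (rule G.finite_measure_mono[OF _ err_set_meas[OF gh]])
    show "{\<xi>. A *v x + \<xi> \<in> S} \<subseteq> {\<xi>. \<delta> < \<bar>ghat (A *v x + \<xi>) - g \<bullet> x\<bar>}"
      using neg by (auto simp: S_def m_def inner_diff_right)
  qed
  moreover have "measure (gauss_noise :: (real ^ 'l) measure) {\<xi>. A *v y + \<xi> \<notin> S} \<le> err_prob A g ghat y \<delta>"
    unfolding err_prob_def
  proof (rule G.finite_measure_mono[OF _ err_set_meas[OF gh]])
    show "{\<xi>. A *v y + \<xi> \<notin> S} \<subseteq> {\<xi>. \<delta> < \<bar>ghat (A *v y + \<xi>) - g \<bullet> y\<bar>}"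
      using neg by (auto simp: S_def m_def inner_diff_right)
  qed
  ultimately show False using ex ey Qq by linarith
qed

lemma LB1:
  fixes X :: "(real ^ 'n::finite) set" and A :: "real ^ 'n ^ 'l::finite" and g :: "real ^ 'n"
    and ghat :: "real ^ 'l \<Rightarrow> real"
  assumes gh: "ghat \<in> borel_measurable borel"
    and sup: "(SUP x\<in>X. ereal (err_prob A g ghat x \<delta>)) < ereal \<epsilon>"
    and xy: "x \<in> X" "y \<in> X"
    and nA: "norm (A *v (x - y)) \<le> 2 * q" and Qq: "Qt q = \<epsilon>"
  shows "g \<bullet> (x - y) / 2 \<le> \<delta>"
proof -
  have e: "err_prob A g ghat z \<delta> < \<epsilon>" if "z \<in> X" for z
  proof -
    have le: "ereal (err_prob A g ghat z \<delta>) \<le> (SUP x\<in>X. ereal (err_prob A g ghat x \<delta>))"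
      using that by (rule SUP_upper)
    show ?thesis using order.strict_trans1[OF le sup] by simp
  qed
  show ?thesis
  proof (cases "g \<bullet> y \<le> g \<bullet> x")
    case True
    then show ?thesis using LB0[OF gh e[OF xy(1)] e[OF xy(2)] nA Qq] by simp
  next
    case False
    have "norm (A *v (y - x)) \<le> 2 * q"
      using nA by (metis matrix_vector_mult_diff_distrib norm_minus_commute)
    then have "g \<bullet> (y - x) / 2 \<le> \<delta>" using LB0[OF gh e[OF xy(2)] e[OF xy(1)] _ Qq] False by simp
    then show ?thesis using False by (simp add: inner_diff_right)
  qed
qed

lemma LB_star:
  fixes X :: "(real ^ 'n::finite) set" and A :: "real ^ 'n ^ 'l::finite" and g :: "real ^ 'n"
  assumes xy: "x \<in> X" "y \<in> X"
    and nA: "norm (A *v (x - y)) \<le> 2 * q" and Qq: "Qt q = \<epsilon>"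
  shows "ereal (g \<bullet> (x - y) / 2) \<le> Risk_star X A g \<epsilon>"
  unfolding Risk_star_def Risk_def
proof (rule INF_greatest)
  fix ghat :: "real ^ 'l \<Rightarrow> real"
  assume gh: "ghat \<in> borel_measurable borel"
  show "ereal (g \<bullet> (x - y) / 2) \<le> Inf (ereal ` {\<delta>. (SUP x\<in>X. ereal (err_prob A g ghat x \<delta>)) < ereal \<epsilon>})"
  proof (rule Inf_greatest)
    fix z assume "z \<in> ereal ` {\<delta>. (SUP x\<in>X. ereal (err_prob A g ghat x \<delta>)) < ereal \<epsilon>}"
    then obtain \<delta> where z: "z = ereal \<delta>" and sup: "(SUP x\<in>X. ereal (err_prob A g ghat x \<delta>)) < ereal \<epsilon>" by auto
    show "ereal (g \<bullet> (x - y) / 2) \<le> z"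
      using LB1[OF gh sup xy nA Qq] z by simp
  qed
qed



lemma half_sets:
  fixes u :: "real ^ 'l::finite"
  shows "{\<xi>. s < u \<bullet> \<xi>} \<in> sets (gauss_noise :: (real ^ 'l) measure)"
    and "{\<xi>. u \<bullet> \<xi> < t} \<in> sets (gauss_noise :: (real ^ 'l) measure)"
proof -
  have c: "continuous_on UNIV (\<lambda>\<xi>::real^'l. u \<bullet> \<xi>)" by (intro continuous_intros)
  have "open {\<xi>::real^'l. s < u \<bullet> \<xi>}" by (intro open_Collect_less continuous_intros)
  then show "{\<xi>. s < u \<bullet> \<xi>} \<in> sets (gauss_noise :: (real ^ 'l) measure)" by simp
  have "open {\<xi>::real^'l. u \<bullet> \<xi> < t}" by (intro open_Collect_less continuous_intros)
  then show "{\<xi>. u \<bullet> \<xi> < t} \<in> sets (gauss_noise :: (real ^ 'l) measure)" by simp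
qed

lemma tail_bound:
  fixes u :: "real ^ 'l::finite"
  assumes Qr: "Qt r = \<epsilon> / 2" and r: "0 \<le> r" and e: "0 < \<epsilon>" and s: "s > r * norm u"
  shows "measure (gauss_noise :: (real ^ 'l) measure) {\<xi>. s < u \<bullet> \<xi>} + measure (gauss_noise :: (real ^ 'l) measure) {\<xi>. u \<bullet> \<xi> < - s} < \<epsilon>"
proof (cases "u = 0")
  case True
  then have "s > 0" using s by simp
  then show ?thesis using True e by simp
next
  case False
  then have nu: "norm u > 0" by simp
  have "s / norm u > r" using s nu by (simp add: field_simps)
  then have "Qt (s / norm u) < Qt r" by (rule Qt_strict_mono)
  then show ?thesis using tail_gt(1)[OF False, of s] tail_gt(3)[OF False, of s] Qr by simp
qed

lemma UB:
  fixes X :: "(real ^ 'n::finite) set" and A :: "real ^ 'n ^ 'l::finite" and g :: "real ^ 'n"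
    and \<phi> :: "real ^ 'l"
  assumes Qr: "Qt r = \<epsilon> / 2" and r: "0 \<le> r" and e: "0 < \<epsilon>"
    and bias: "\<And>x. x \<in> X \<Longrightarrow> \<bar>c - (g \<bullet> x - \<phi> \<bullet> (A *v x))\<bar> \<le> M - r * norm \<phi>"
  shows "Risk X A g (\<lambda>\<omega>. \<phi> \<bullet> \<omega> + c) \<epsilon> \<le> ereal M"
proof -
  interpret G: prob_space "gauss_noise :: (real ^ 'l) measure" by (rule prob_space_gauss)
  have each: "Risk X A g (\<lambda>\<omega>. \<phi> \<bullet> \<omega> + c) \<epsilon> \<le> ereal \<delta>" if d: "\<delta> > M" for \<delta>
  proof -
    define s where "s = \<delta> - (M - r * norm \<phi>)"
    have s: "s > r * norm \<phi>" using d by (simp add: s_def)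
    define p where "p = measure (gauss_noise :: (real ^ 'l) measure) {\<xi>. s < \<phi> \<bullet> \<xi>} + measure (gauss_noise :: (real ^ 'l) measure) {\<xi>. \<phi> \<bullet> \<xi> < - s}"
    have p: "p < \<epsilon>" unfolding p_def by (rule tail_bound[OF Qr r e s])
    have ex: "err_prob A g (\<lambda>\<omega>. \<phi> \<bullet> \<omega> + c) x \<delta> \<le> p" if x: "x \<in> X" for x
    proof -
      define b where "b = c - (g \<bullet> x - \<phi> \<bullet> (A *v x))"
      have b: "\<bar>b\<bar> \<le> M - r * norm \<phi>" using bias[OF x] by (simp add: b_def)
      have sub: "{\<xi>. \<delta> < \<bar>\<phi> \<bullet> (A *v x + \<xi>) + c - g \<bullet> x\<bar>} \<subseteq> {\<xi>. s < \<phi> \<bullet> \<xi>} \<union> {\<xi>. \<phi> \<bullet> \<xi> < - s}"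
      proof
        fix \<xi> assume "\<xi> \<in> {\<xi>. \<delta> < \<bar>\<phi> \<bullet> (A *v x + \<xi>) + c - g \<bullet> x\<bar>}"
        then have "\<delta> < \<bar>\<phi> \<bullet> \<xi> + b\<bar>" by (simp add: b_def inner_add_right algebra_simps)
        then show "\<xi> \<in> {\<xi>. s < \<phi> \<bullet> \<xi>} \<union> {\<xi>. \<phi> \<bullet> \<xi> < - s}" using b by (auto simp: s_def)
      qed
      have "err_prob A g (\<lambda>\<omega>. \<phi> \<bullet> \<omega> + c) x \<delta> \<le> measure (gauss_noise :: (real ^ 'l) measure) ({\<xi>. s < \<phi> \<bullet> \<xi>} \<union> {\<xi>. \<phi> \<bullet> \<xi> < - s})"
        unfolding err_prob_def using sub half_sets by (intro G.finite_measure_mono) auto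
      also have "\<dots> \<le> p" unfolding p_def using half_sets by (intro measure_Un_le) auto
      finally show ?thesis .
    qed
    have "(SUP x\<in>X. ereal (err_prob A g (\<lambda>\<omega>. \<phi> \<bullet> \<omega> + c) x \<delta>)) \<le> ereal p"
      using ex by (intro SUP_least) simp
    also have "\<dots> < ereal \<epsilon>" using p by simp
    finally have "ereal \<delta> \<in> ereal ` {\<delta>. (SUP x\<in>X. ereal (err_prob A g (\<lambda>\<omega>. \<phi> \<bullet> \<omega> + c) x \<delta>)) < ereal \<epsilon>}" by auto
    then show ?thesis unfolding Risk_def by (rule Inf_lower)
  qed
  show ?thesis
  proof (rule ccontr)
    assume "\<not> ?thesis"
    then have "ereal M < Risk X A g (\<lambda>\<omega>. \<phi> \<bullet> \<omega> + c) \<epsilon>" by simp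
    then obtain z where z: "ereal M < ereal z" "ereal z < Risk X A g (\<lambda>\<omega>. \<phi> \<bullet> \<omega> + c) \<epsilon>"
      using ereal_dense2 by blast
    then show False using each[of z] by simp
  qed
qed



theorem proposition4p2:
  fixes X :: "(real ^ 'n) set" and A :: "real ^ 'n ^ 'l" and g :: "real ^ 'n"
    and \<epsilon> :: real
  assumes "X \<noteq> {}" and "convex X" and "compact X"
    and "0 < \<epsilon>" and "\<epsilon> < 1/2"
  shows "\<exists>(\<phi> :: real ^ 'l) (c :: real).
           Risk X A g (\<lambda>\<omega>. \<phi> \<bullet> \<omega> + c) \<epsilon>
             \<le> ereal (ErfInv (\<epsilon> / 2) / ErfInv \<epsilon>) * Risk_star X A g \<epsilon>"
proof -
  note Xne = assms(1) and Xc = assms(2) and Xk = assms(3) and e0 = assms(4) and e1 = assms(5)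
  define q where "q = ErfInv \<epsilon>"
  define r where "r = ErfInv (\<epsilon> / 2)"
  have Qq: "Qt q = \<epsilon>" unfolding q_def using e0 e1 by (intro Qt_ErfInv) auto
  have Qr: "Qt r = \<epsilon> / 2" unfolding r_def using e0 e1 by (intro Qt_ErfInv) auto
  have q0: "q > 0"
  proof (rule ccontr)
    assume "\<not> q > 0"
    then have "Qt 0 \<le> Qt q" by (intro Qt_mono) simp
    then show False using Qq Qt_0 e1 by simp
  qed
  have qr: "q < r"
  proof (rule ccontr)
    assume "\<not> q < r"
    then have "Qt q \<le> Qt r" by (intro Qt_mono) simp
    then show False using Qq Qr e0 by simp
  qed
  have r0: "r > 0" using q0 qr by simp
  define \<kappa> where "\<kappa> = r / q"
  have \<kappa>: "\<kappa> > 0" using q0 r0 by (simp add: \<kappa>_def)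
  have \<kappa>eq: "ErfInv (\<epsilon> / 2) / ErfInv \<epsilon> = \<kappa>" by (simp add: \<kappa>_def q_def r_def)
  define RS where "RS = Risk_star X A g \<epsilon>"
  obtain x0 where x0: "x0 \<in> X" using Xne by blast
  have RS0: "ereal 0 \<le> RS"
    using LB_star[OF x0 x0 _ Qq, of A g] q0 by (simp add: RS_def)
  show ?thesis
  proof (cases "RS = \<infinity>")
    case True
    then show ?thesis using \<kappa> by (auto simp: \<kappa>eq RS_def[symmetric])
  next
    case False
    then obtain m where m: "RS = ereal m" using RS0 by (cases RS) auto
    have m0: "0 \<le> m" using RS0 m by simp
    define M where "M = \<kappa> * m"
    define D where "D = (\<Union>x\<in>X. \<Union>y\<in>X. {x - y})"
    have cD: "convex D" unfolding D_def by (rule convex_differences[OF Xc Xc])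
    have D0: "0 \<in> D" unfolding D_def using x0 by force
    have bound: "g \<bullet> d / 2 \<le> M" if d: "d \<in> D" and nd: "norm (A *v d) \<le> 2 * r" for d
    proof -
      obtain x y where xy: "x \<in> X" "y \<in> X" "d = x - y" using d by (auto simp: D_def)
      define \<theta> where "\<theta> = q / r"
      have \<theta>: "0 < \<theta>" "\<theta> < 1" using q0 qr by (auto simp: \<theta>_def)
      define x' where "x' = ((1 + \<theta>) / 2) *\<^sub>R x + ((1 - \<theta>) / 2) *\<^sub>R y"
      define y' where "y' = ((1 - \<theta>) / 2) *\<^sub>R x + ((1 + \<theta>) / 2) *\<^sub>R y"
      have x'X: "x' \<in> X" unfolding x'_def
        by (rule convexD[OF Xc xy(1) xy(2)]) (use \<theta> in \<open>simp_all add: add_divide_distrib[symmetric]\<close>)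
      have y'X: "y' \<in> X" unfolding y'_def
        by (rule convexD[OF Xc xy(1) xy(2)]) (use \<theta> in \<open>simp_all add: add_divide_distrib[symmetric]\<close>)
      have dd: "x' - y' = \<theta> *\<^sub>R d"
      proof -
        have "x' - y' = ((1 + \<theta>) / 2 - (1 - \<theta>) / 2) *\<^sub>R x - ((1 + \<theta>) / 2 - (1 - \<theta>) / 2) *\<^sub>R y"
          unfolding x'_def y'_def by (simp add: algebra_simps)
        also have "(1 + \<theta>) / 2 - (1 - \<theta>) / 2 = \<theta>" by (simp add: diff_divide_distrib[symmetric])
        finally show ?thesis by (simp add: scaleR_diff_right xy(3))
      qed
      have "norm (A *v (x' - y')) = \<theta> * norm (A *v d)"
        using \<theta> by (simp add: dd matrix_vector_mult_scaleR)
      also have "\<dots> \<le> \<theta> * (2 * r)" using \<theta> nd by (intro mult_left_mono) auto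
      also have "\<dots> = 2 * q" using r0 by (simp add: \<theta>_def)
      finally have "norm (A *v (x' - y')) \<le> 2 * q" .
      from LB_star[OF x'X y'X this Qq, of g]
      have "\<theta> * (g \<bullet> d) / 2 \<le> m" using m by (simp add: RS_def dd)
      then have "g \<bullet> d / 2 \<le> m / \<theta>" using \<theta> by (simp add: field_simps)
      also have "m / \<theta> = M" using q0 r0 by (simp add: \<theta>_def M_def \<kappa>_def)
      finally show ?thesis .
    qed
    obtain \<phi> where \<phi>: "\<And>d. d \<in> D \<Longrightarrow> (g \<bullet> d - \<phi> \<bullet> (A *v d)) / 2 + r * norm \<phi> \<le> M"
      using duality[OF cD D0 r0 bound] by blast
    define h where "h = (\<lambda>x. g \<bullet> x - \<phi> \<bullet> (A *v x))"
    have hc: "continuous_on X h" unfolding h_def by (intro continuous_intros)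
    obtain xM where xM: "xM \<in> X" "\<And>y. y \<in> X \<Longrightarrow> h y \<le> h xM"
      using continuous_attains_sup[OF Xk Xne hc] by blast
    obtain xm where xm: "xm \<in> X" "\<And>y. y \<in> X \<Longrightarrow> h xm \<le> h y"
      using continuous_attains_inf[OF Xk Xne hc] by blast
    define c where "c = (h xM + h xm) / 2"
    have hd: "h xM - h xm = g \<bullet> (xM - xm) - \<phi> \<bullet> (A *v (xM - xm))"
      by (simp add: h_def matrix_vector_mult_diff_distrib inner_diff_right)
    have "xM - xm \<in> D" unfolding D_def using xM(1) xm(1) by blast
    have "(h xM - h xm) / 2 + r * norm \<phi> \<le> M" using \<phi>[OF \<open>xM - xm \<in> D\<close>] by (simp only: hd)
    then have hb: "(h xM - h xm) / 2 \<le> M - r * norm \<phi>" by linarith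
    have bias: "\<bar>c - (g \<bullet> x - \<phi> \<bullet> (A *v x))\<bar> \<le> M - r * norm \<phi>" if x: "x \<in> X" for x
    proof -
      have "h xm \<le> h x" "h x \<le> h xM" using xM(2)[OF x] xm(2)[OF x] by auto
      then have "\<bar>c - h x\<bar> \<le> (h xM - h xm) / 2" unfolding c_def abs_le_iff by (intro conjI) argo+
      then show ?thesis using hb by (simp add: h_def)
    qed
    have "Risk X A g (\<lambda>\<omega>. \<phi> \<bullet> \<omega> + c) \<epsilon> \<le> ereal M"
      by (rule UB[OF Qr _ e0 bias]) (use r0 in auto)
    also have "ereal M = ereal (ErfInv (\<epsilon> / 2) / ErfInv \<epsilon>) * Risk_star X A g \<epsilon>"
      using m by (simp add: M_def \<kappa>eq RS_def[symmetric])
    finally show ?thesis by blast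
  qed
qed


end
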